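(* Let $\ell$ be a positive integer. If a partial $(n,k,t)_\lambda$-system has a nondeficient $\ell$-presequencing, then it has a cyclically $\ell$-good sequencing.
   Context: For positive integers $n,k,t,\lambda$ with $n \geq k > t \geq 2$, a partial $(n,k,t)_\lambda$-system is a pair $(X,\mathcal{B})$ where $X$ is an $n$-set of vertices and $\mathcal{B}$ is a collection of $k$-subsets of $X$ (blocks) such that each $t$-subset of $X$ is contained in at most $\lambda$ blocks. An independent set is a subset of $X$ containing no block. A sequencing is a bijection $\varphi:\mathbb{Z}_n\to X$; a set $S$ is cyclically consecutive if $S=\{\varphi(i),\ldots,\varphi(i+|S|-1)\}$ for some $i\in\mathbb{Z}_n$ (addition mod $n$); the sequencing is cyclically $\ell$-good if every set of $\ell$ cyclically consecutive vertices is independent. An $\ell$-buffered set is a triple $(S,S^{L},S^{R})$ with $S^{L},S^{R}\subseteq S$ (buffers) such that: (B1) if $|S|\le \ell-2$ then $S^{L}=S^{R}=S$; (B2) if $\ell-1\le |S|\le 2\ell-2$ then $|S^{L}|=|S^{R}|=\ell-1$ and $S^{L}\cup S^{R}=S$; (B3) if $|S|\ge 2\ell-1$ then $|S^{L}|=|S^{R}|=\ell-1$ and $S^{L}\cap S^{R}=\emptyset$. It is deficient if $|S|\le \ell-2$ and nondeficient otherwise. An $\ell$-presequencing of $(X,\mathcal{B})$ is a tuple $(X_0,\ldots,X_{s-1})$ of $\ell$-buffered sets (classes) whose underlying sets partition $X$, such that (P1) each $X_i$ is independent, and (P2) for each $i\in\mathbb{Z}_s$, $X_i^{R}\cup X_{i+1}^{L}$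 is independent (indices mod $s$). It is nondeficient if every class is nondeficient. *)

theory Defs
  imports Main "HOL-Library.Multiset"
begin

definition partial_system ::
  "nat \<Rightarrow> nat \<Rightarrow> nat \<Rightarrow> nat \<Rightarrow> 'a set \<Rightarrow> 'a set multiset \<Rightarrow> bool" where
  "partial_system n k t lam X B \<longleftrightarrow>
     finite X \<and> card X = n \<and> 0 < lam \<and> n \<ge> k \<and> k > t \<and> t \<ge> 2 \<and>
     (\<forall>b \<in># B. b \<subseteq> X \<and> card b = k) \<and>
     (\<forall>T. T \<subseteq> X \<longrightarrow> card T = t \<longrightarrow> size (filter_mset (\<lambda>b. T \<subseteq> b) B) \<le> lam)"

definition independent :: "'a set \<Rightarrow> 'a set multiset \<Rightarrow> 'a set \<Rightarrow> bool" where
  "independent X B S \<longleftrightarrow> S \<subseteq> X \<and> (\<forall>b \<in># B. \<not> b \<subseteq> S)"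

text \<open>A sequencing: a bijection from Z_n (represented as {0..<n}) onto X.\<close>
definition sequencing :: "nat \<Rightarrow> 'a set \<Rightarrow> (nat \<Rightarrow> 'a) \<Rightarrow> bool" where
  "sequencing n X \<phi> \<longleftrightarrow> bij_betw \<phi> {0..<n} X"

definition cyclically_consecutive :: "nat \<Rightarrow> (nat \<Rightarrow> 'a) \<Rightarrow> 'a set \<Rightarrow> bool" where
  "cyclically_consecutive n \<phi> S \<longleftrightarrow>
     (\<exists>i<n. S = {\<phi> ((i + j) mod n) | j. j < card S})"

definition cyclically_good ::
  "nat \<Rightarrow> nat \<Rightarrow> 'a set \<Rightarrow> 'a set multiset \<Rightarrow> (nat \<Rightarrow> 'a) \<Rightarrow> bool" where
  "cyclically_good l n X B \<phi> \<longleftrightarrow>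
     (\<forall>S. S \<subseteq> X \<longrightarrow> card S = l \<longrightarrow> cyclically_consecutive n \<phi> S \<longrightarrow> independent X B S)"

text \<open>An l-buffered set (S, S^L, S^R); nat subtraction avoided in the size bounds.\<close>
definition buffered :: "nat \<Rightarrow> 'a set \<times> 'a set \<times> 'a set \<Rightarrow> bool" where
  "buffered l C \<longleftrightarrow> (case C of (S, SL, SR) \<Rightarrow>
     SL \<subseteq> S \<and> SR \<subseteq> S \<and>
     (card S + 2 \<le> l \<longrightarrow> SL = S \<and> SR = S) \<and>
     (l \<le> card S + 1 \<and> card S + 2 \<le> 2 * l \<longrightarrow>
        card SL = l - 1 \<and> card SR = l - 1 \<and> SL \<union> SR = S) \<and>
     (2 * l \<le> card S + 1 \<longrightarrow>
        card SL = l - 1 \<and> card SR = l - 1 \<and> SL \<inter> SR = {}))"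

definition deficient :: "nat \<Rightarrow> 'a set \<times> 'a set \<times> 'a set \<Rightarrow> bool" where
  "deficient l C \<longleftrightarrow> card (fst C) + 2 \<le> l"

definition presequencing ::
  "nat \<Rightarrow> 'a set \<Rightarrow> 'a set multiset \<Rightarrow> ('a set \<times> 'a set \<times> 'a set) list \<Rightarrow> bool" where
  "presequencing l X B P \<longleftrightarrow>
     P \<noteq> [] \<and>
     (\<forall>i < length P. buffered l (P ! i)) \<and>
     (\<forall>i < length P. fst (P ! i) \<noteq> {}) \<and>
     (\<forall>i < length P. \<forall>j < length P. i \<noteq> j \<longrightarrow> fst (P ! i) \<inter> fst (P ! j) = {}) \<and>
     (\<Union>i < length P. fst (P ! i)) = X \<and>
     (\<forall>i < length P. independent X B (fst (P ! i))) \<and>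
     (\<forall>i < length P. independent X B
         (snd (snd (P ! i)) \<union> fst (snd (P ! ((i + 1) mod length P)))))"

definition nondeficient_presequencing :: "nat \<Rightarrow> ('a set \<times> 'a set \<times> 'a set) list \<Rightarrow> bool" where
  "nondeficient_presequencing l P \<longleftrightarrow> (\<forall>i < length P. \<not> deficient l (P ! i))"

end

theory Submission
  imports Defs
begin

lemma seg:
  assumes mono: "\<And>A C. Q C \<Longrightarrow> A \<subseteq> C \<Longrightarrow> Q A"
    and emp: "Q {}"
    and blocks: "\<forall>b\<in>set bs. l - 1 \<le> length b \<and> Q (set b)"
    and pairs: "\<forall>i. Suc i < length bs \<longrightarrow>
       Q (set (drop (length (bs!i) - (l-1)) (bs!i)) \<union> set (take (l-1) (bs!Suc i)))"
    and ml: "m \<le> l"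
  shows "Q (set (take m (drop p (concat bs))))"
  using blocks pairs
proof (induction bs arbitrary: p)
  case Nil
  then show ?case using emp by simp
next
  case (Cons b bs)
  have IH: "Q (set (take m (drop p' (concat bs))))" for p'
    apply (rule Cons.IH)
    using Cons.prems(1) apply simp
    using Cons.prems(2) by (metis Suc_less_eq length_Cons nth_Cons_Suc)
  have Qb: "Q (set b)" and lb: "l - 1 \<le> length b" using Cons.prems(1) by auto
  show ?case
  proof (cases "length b \<le> p")
    case True
    then show ?thesis using IH[of "p - length b"] by simp
  next
    case pb: False
    show ?thesis
    proof (cases "m \<le> length b - p")
      case True
      then have e: "take m (drop p (concat (b # bs))) = take m (drop p b)" using pb by simp
      have "set (take m (drop p b)) \<subseteq> set b"
        by (meson order_trans set_drop_subset set_take_subset)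
      then show ?thesis unfolding e using mono[OF Qb] by blast
    next
      case False
      define c where "c = m - (length b - p)"
      have eq: "take m (drop p (concat (b # bs))) = drop p b @ take c (concat bs)"
        using pb False by (simp add: c_def)
      show ?thesis
      proof (cases bs)
        case Nil
        then show ?thesis using eq mono[OF Qb] by (simp add: set_drop_subset)
      next
        case (Cons b' bs')
        have lb': "l - 1 \<le> length b'" using Cons.prems(1) \<open>bs = b' # bs'\<close> by simp
        have cl: "c \<le> l - 1" using False ml pb by (simp add: c_def)
        have tk: "take c (concat bs) = take c b'" using \<open>bs = b' # bs'\<close> cl lb' by simp
        have pr: "Q (set (drop (length b - (l-1)) b) \<union> set (take (l-1) b'))"
          using Cons.prems(2)[rule_format, of 0] \<open>bs = b' # bs'\<close> by simp
        have s1: "set (drop p b) \<subseteq> set (drop (length b - (l-1)) b)"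
          by (rule set_drop_subset_set_drop) (use False ml in linarith)
        have s2: "set (take c b') \<subseteq> set (take (l-1) b')"
          by (rule set_take_subset_set_take) (rule cl)
        show ?thesis using eq tk s1 s2 mono[OF pr] by (metis Un_mono set_append)
      qed
    qed
  qed
qed


lemma block_exists:
  assumes buf: "buffered l (S,L,R)" and fin: "finite S" and nd: "l \<le> card S + 1" and l0: "0 < l"
  shows "\<exists>b. distinct b \<and> set b = S \<and> set (take (l-1) b) = L \<and>
             set (drop (length b - (l-1)) b) = R"
proof -
  have LS: "L \<subseteq> S" and RS: "R \<subseteq> S" using buf by (auto simp: buffered_def)
  have fL: "finite L" "finite R" using LS RS fin finite_subset by auto
  have cL: "card L = l - 1" and cR: "card R = l - 1"
    and cs: "L \<union> R = S \<or> L \<inter> R = {}"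
  proof -
    have B: "(l \<le> card S + 1 \<and> card S + 2 \<le> 2 * l \<longrightarrow>
        card L = l - 1 \<and> card R = l - 1 \<and> L \<union> R = S) \<and>
     (2 * l \<le> card S + 1 \<longrightarrow>
        card L = l - 1 \<and> card R = l - 1 \<and> L \<inter> R = {})" using buf unfolding buffered_def by simp
    show "card L = l - 1" "card R = l - 1" "L \<union> R = S \<or> L \<inter> R = {}"
      using B nd by (cases "2 * l \<le> card S + 1"; simp)+
  qed
  obtain a where a: "distinct a" "set a = L - R" using finite_distinct_list fL by (meson finite_Diff)
  obtain c where c: "distinct c" "set c = L \<inter> R" using finite_distinct_list fL by (meson finite_Int)
  obtain d where d: "distinct d" "set d = S - L - R" using finite_distinct_list fin by (meson finite_Diff)
  obtain e where e: "distinct e" "set e = R - L" using finite_distinct_list fL by (meson finite_Diff)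
  have la: "length a = card (L - R)" using a distinct_card by metis
  have lc: "length c = card (L \<inter> R)" using c distinct_card by metis
  have le: "length e = card (R - L)" using e distinct_card by metis
  have ac: "length a + length c = l - 1"
    using la lc cL card_Int_Diff[OF fL(1), of R] by simp
  have ce: "length c + length e = l - 1"
    using le lc cR card_Int_Diff[OF fL(2), of L] by (simp add: Int_commute)
  define b where "b = a @ c @ d @ e"
  have db: "distinct b" unfolding b_def using a c d e by auto
  have sb: "set b = S" unfolding b_def using a c d e LS RS by auto
  have tk: "take (l-1) b = a @ c" unfolding b_def using ac by (simp flip: ac)
  have dr: "set (drop (length b - (l-1)) b) = R"
    using cs
  proof
    assume "L \<union> R = S"
    then have "set d = {}" using d by auto then have "d = []" by simp
    then show ?thesis unfolding b_def using ce c e by (simp flip: ce) blast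
  next
    assume "L \<inter> R = {}"
    then have "set c = {}" using c by auto then have "c = []" by simp
    then show ?thesis unfolding b_def using ce c e \<open>L \<inter> R = {}\<close> by (simp flip: ce) blast
  qed
  show ?thesis using db sb tk dr a c by (intro exI[of _ b]) auto
qed



lemma nth_append_self:
  assumes "p < 2 * length xs"
  shows "(xs @ xs) ! p = xs ! (p mod length xs)"
proof (cases "p < length xs")
  case True then show ?thesis by (simp add: nth_append)
next
  case False
  then have "p mod length xs = p - length xs"
    using assms by (simp add: mod_if)
  then show ?thesis using False by (simp add: nth_append)
qed

lemma indep_mono: "independent X B C \<Longrightarrow> A \<subseteq> C \<Longrightarrow> independent X B A"
  unfolding independent_def by blast

theorem lemma5:
  fixes n k t lam l :: nat and X :: "'a set" and B :: "'a set multiset"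
    and P :: "('a set \<times> 'a set \<times> 'a set) list"
  assumes "partial_system n k t lam X B"
    and "0 < l"
    and "presequencing l X B P"
    and "nondeficient_presequencing l P"
  shows "\<exists>\<phi>. sequencing n X \<phi> \<and> cyclically_good l n X B \<phi>"
proof -
  have finX: "finite X" and cX: "card X = n" using assms(1) by (auto simp: partial_system_def)
  have emp: "independent X B {}"
  proof -
    have "\<forall>b\<in>#B. card b = k" and "k > 2" using assms(1) unfolding partial_system_def by auto
    then show ?thesis unfolding independent_def by force
  qed
  define s where "s = length P"
  have s0: "0 < s" using assms(3) by (simp add: presequencing_def s_def)
  have PP: "\<forall>i < s. buffered l (P ! i)"
     "\<forall>i < s. fst (P ! i) \<noteq> {}"
     "\<forall>i < s. \<forall>j < s. i \<noteq> j \<longrightarrow> fst (P ! i) \<inter> fst (P ! j) = {}"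
     "(\<Union>i < s. fst (P ! i)) = X"
     "\<forall>i < s. independent X B (fst (P ! i))"
     "\<forall>i < s. independent X B (snd (snd (P ! i)) \<union> fst (snd (P ! ((i + 1) mod s))))"
    using assms(3) unfolding presequencing_def s_def by auto
  have nd: "\<forall>i < s. l \<le> card (fst (P ! i)) + 1"
    using assms(4) unfolding nondeficient_presequencing_def deficient_def s_def by auto
  define bprop where "bprop = (\<lambda>i b. distinct b \<and> set b = fst (P!i) \<and>
       set (take (l-1) b) = fst (snd (P!i)) \<and>
       set (drop (length b - (l-1)) b) = snd (snd (P!i)))"
  define blk where "blk = (\<lambda>i. SOME b. bprop i b)"
  have blk: "bprop i (blk i)" if "i < s" for i
  proof -
    obtain S L R where SLR: "P ! i = (S, L, R)" by (metis prod_cases3)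
    have "S \<subseteq> X" using PP(4) that SLR by force
    then have "finite S" using finX finite_subset by blast
    then have "\<exists>b. bprop i b"
      unfolding bprop_def SLR fst_conv snd_conv
      using block_exists[of l S L R] PP(1) nd that SLR assms(2) by fastforce
    then show ?thesis unfolding blk_def by (rule someI_ex)
  qed
  have lenblk: "length (blk i) = card (fst (P!i))" if "i < s" for i
    using blk[OF that] unfolding bprop_def by (metis distinct_card)
  define bs1 where "bs1 = map blk [0..<s]"
  define xs where "xs = concat bs1"
  have setxs: "set xs = X"
    unfolding xs_def bs1_def using blk PP(4) unfolding bprop_def by auto
  have distbs: "distinct bs1" unfolding bs1_def distinct_map
  proof
    show "inj_on blk (set [0..<s])"
    proof (rule inj_onI)
      fix i j assume ij: "i \<in> set [0..<s]" "j \<in> set [0..<s]" "blk i = blk j"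
      show "i = j"
      proof (rule ccontr)
        assume "i \<noteq> j"
        then have "fst (P ! i) \<inter> fst (P ! j) = {}" using PP(3) ij by auto
        moreover have "fst (P ! i) = fst (P ! j)" using blk ij unfolding bprop_def by (metis atLeastLessThan_iff set_upt)
        ultimately show False using PP(2) ij by auto
      qed
    qed
  qed simp
  have distxs: "distinct xs" unfolding xs_def
  proof (rule distinct_concat[OF distbs])
    fix ys assume "ys \<in> set bs1" then show "distinct ys" using blk unfolding bs1_def bprop_def by auto
  next
    fix ys zs assume h: "ys \<in> set bs1" "zs \<in> set bs1" "ys \<noteq> zs"
    then obtain i j where "i < s" "j < s" "ys = blk i" "zs = blk j" unfolding bs1_def by auto
    then show "set ys \<inter> set zs = {}" using h PP(3) blk unfolding bprop_def by metis
  qed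
  have lenxs: "length xs = n" using distinct_card[OF distxs] setxs cX by simp
  have seqn: "sequencing n X ((!) xs)"
    unfolding sequencing_def by (rule bij_betw_nth[OF distxs]) (auto simp: lenxs setxs)
  define bs where "bs = bs1 @ bs1"
  have bsnth: "bs ! q = blk (q mod s)" if "q < 2 * s" for q
    unfolding bs_def using nth_append_self[of q bs1] that by (simp add: bs1_def)
  have lenbs: "length bs = 2 * s" by (simp add: bs_def bs1_def)
  have good: "independent X B (set (take l (drop p (xs @ xs))))" for p
  proof -
    have "xs @ xs = concat bs" by (simp add: bs_def xs_def)
    moreover have "independent X B (set (take l (drop p (concat bs))))"
    proof (rule seg[where Q = "independent X B"])
      show "independent X B A" if "independent X B C" "A \<subseteq> C" for A C using indep_mono that .
      show "independent X B {}" by (rule emp)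
      show "\<forall>b\<in>set bs. l - 1 \<le> length b \<and> independent X B (set b)"
      proof
        fix b assume "b \<in> set bs"
        then obtain i where i: "i < s" "b = blk i" by (auto simp: bs_def bs1_def)
        then show "l - 1 \<le> length b \<and> independent X B (set b)"
          using lenblk nd PP(5) blk unfolding bprop_def by force
      qed
      show "\<forall>i. Suc i < length bs \<longrightarrow> independent X B
         (set (drop (length (bs ! i) - (l - 1)) (bs ! i)) \<union> set (take (l - 1) (bs ! Suc i)))"
      proof (intro allI impI)
        fix q assume q: "Suc q < length bs"
        have e1: "bs ! q = blk (q mod s)" using q lenbs bsnth by simp
        have e2: "bs ! Suc q = blk ((q mod s + 1) mod s)" using q lenbs bsnth by (simp add: mod_Suc_eq)
        have ms: "q mod s < s" "(q mod s + 1) mod s < s" using s0 by auto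
        show "independent X B
         (set (drop (length (bs ! q) - (l - 1)) (bs ! q)) \<union> set (take (l - 1) (bs ! Suc q)))"
          unfolding e1 e2 using blk[OF ms(1)] blk[OF ms(2)] PP(6) ms unfolding bprop_def by simp
      qed
    qed simp
    ultimately show ?thesis by simp
  qed
  have cg: "cyclically_good l n X B ((!) xs)"
    unfolding cyclically_good_def
  proof (intro allI impI)
    fix S assume SX: "S \<subseteq> X" and cS: "card S = l" and cc: "cyclically_consecutive n ((!) xs) S"
    obtain i where i: "i < n" "S = {xs ! ((i + j) mod n) | j. j < l}"
      using cc cS unfolding cyclically_consecutive_def by auto
    have ln: "l \<le> n" using cS SX finX cX card_mono by metis
    have "set (take l (drop i (xs @ xs))) = S"
    proof -
      have len: "length (take l (drop i (xs @ xs))) = l" using i ln lenxs by simp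
      have "set (take l (drop i (xs @ xs))) = {take l (drop i (xs @ xs)) ! j | j. j < l}"
        using set_conv_nth[of "take l (drop i (xs @ xs))"] len by simp
      also have "\<dots> = {xs ! ((i + j) mod n) | j. j < l}"
      proof -
        have "take l (drop i (xs @ xs)) ! j = xs ! ((i + j) mod n)" if "j < l" for j
        proof -
          have "take l (drop i (xs @ xs)) ! j = drop i (xs @ xs) ! j" by (rule nth_take[OF that])
          also have "\<dots> = (xs @ xs) ! (i + j)" using i lenxs by (intro nth_drop) simp
          also have "\<dots> = xs ! ((i + j) mod n)"
          proof -
            have "i + j < 2 * length xs" using that i ln lenxs by linarith
            then show ?thesis using nth_append_self[of "i + j" xs] lenxs by metis
          qed
          finally show ?thesis .
        qed
        then show ?thesis by metis
      qed
      finally show ?thesis using i by simp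
    qed
    then show "independent X B S" using good[of i] by simp
  qed
  show ?thesis using seqn cg by blast
qed

end
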